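(* For every $a,b>0$ and $s\in(-2a,b)$, with the two summands independent, $$\mathbb{E}\left[(\mathbf{B}'_{a,b}+\mathbf{B}'_{a,b})^s\right]=\frac{2^{2a+s}\,\Gamma(a+b)^2\,\Gamma(2b-s)\,\Gamma(2a+s)}{\Gamma(2a)\Gamma(b)^2\Gamma(2a+2b)}\;{}_3F_2\!\left(a+\tfrac s2,\,a+\tfrac{s+1}{2},\,\tfrac12;\,a+\tfrac12,\,a+b+\tfrac12;\,1\right).$$
   Context: For $p,q>0$, $\mathbf{B}'_{p,q}$ denotes a beta prime random variable with density $\frac{\Gamma(p+q)}{\Gamma(p)\Gamma(q)}\frac{x^{p-1}}{(1+x)^{p+q}}$ on $(0,\infty)$. ${}_3F_2(\alpha_1,\alpha_2,\alpha_3;\beta_1,\beta_2;z)=\sum_{n\ge0}\frac{(\alpha_1)_n(\alpha_2)_n(\alpha_3)_n}{(\beta_1)_n(\beta_2)_n\,n!}z^n$ is the generalized hypergeometric series, $(x)_n$ the Pochhammer symbol. *)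

theory Defs
  imports "HOL-Probability.Probability"
begin

definition beta_prime_density :: "real \<Rightarrow> real \<Rightarrow> real \<Rightarrow> real" where
  "beta_prime_density p q x =
     (if 0 < x then Gamma (p + q) / (Gamma p * Gamma q) * x powr (p - 1) / (1 + x) powr (p + q)
      else 0)"

definition hyp3F2 :: "real \<Rightarrow> real \<Rightarrow> real \<Rightarrow> real \<Rightarrow> real \<Rightarrow> real \<Rightarrow> real" where
  "hyp3F2 a1 a2 a3 b1 b2 z =
     (\<Sum>n. pochhammer a1 n * pochhammer a2 n * pochhammer a3 n
            / (pochhammer b1 n * pochhammer b2 n * fact n) * z ^ n)"

end

theory Submission
  imports Defs "HOL-Real_Asymp.Real_Asymp"
begin

lemma neg_binomial_series:
  fixes z c :: real
  assumes "0 \<le> z" "z < 1"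
  shows "(\<lambda>n. pochhammer c n / fact n * z^n) sums ((1 - z) powr (-c))"
proof -
  have "\<bar>-z\<bar> < 1" using assms by simp
  from gen_binomial_real[OF this, of "-c"]
  have "(\<lambda>n. ((-c) gchoose n) * (-z)^n) sums (1 + -z) powr (-c)" .
  moreover have "((-c) gchoose n) * (-z)^n = pochhammer c n / fact n * z^n" for n
  proof -
    have "((-c) gchoose n) = (-1)^n * pochhammer c n / fact n"
      using gbinomial_pochhammer[of "-c" n] by simp
    moreover have "(-z)^n = (-1)^n * z^n" by (rule power_minus)
    ultimately have "((-c) gchoose n) * (-z)^n = ((-1)^n * (-1)^n) * (pochhammer c n / fact n * z^n)"
      by simp
    also have "(-1::real)^n * (-1)^n = 1" by (simp flip: power_add)
    finally show ?thesis by simp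
  qed
  ultimately show ?thesis by simp
qed

lemma beta_prime_nn:
  fixes A B :: real
  assumes A: "0 < A" and B: "0 < B"
  shows "(\<integral>\<^sup>+u. ennreal (u powr (A - 1) / (1 + u) powr (A + B)) * indicator {0<..} u \<partial>lborel)
         = ennreal (Beta A B)"
proof -
  define f where "f u = u powr (A - 1) / (1 + u) powr (A + B)" for u :: real
  define g where "g r = r / (1 - r)" for r :: real
  define g' where "g' r = 1 / (1 - r)^2" for r :: real
  define h where "h t = t powr (A - 1) * (1 - t) powr (B - 1)" for t :: real
  have fgh: "f (g r) * g' r = h r" if "0 < r" "r < 1" for r
  proof -
    have r1: "1 - r > 0" using that by simp
    have "1 + r / (1 - r) = 1 / (1 - r)" using r1 by (simp add: field_simps)
    hence "f (g r) = (r / (1 - r)) powr (A - 1) / (1 / (1 - r)) powr (A + B)"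
      by (simp add: f_def g_def)
    also have "\<dots> = r powr (A - 1) * ((1 - r) powr (A + B) / (1 - r) powr (A - 1))"
      using r1 that by (simp add: powr_divide)
    also have "\<dots> = r powr (A - 1) * (1 - r) powr (A + B - (A - 1))"
      by (simp only: powr_diff[of "1 - r" "A + B" "A - 1"])
    finally have "f (g r) * g' r = r powr (A - 1) * (1 - r) powr (A + B - (A - 1)) / (1 - r) powr 2"
      using r1 by (simp add: g'_def powr_realpow)
    also have "\<dots> = r powr (A - 1) * (1 - r) powr (B - 1)"
    proof -
      have "(1 - r) powr (A + B - (A - 1)) = (1 - r) powr 2 * (1 - r) powr (B - 1)"
        using powr_add[of "1 - r" 2 "B - 1"] by (simp add: add.commute)
      thus ?thesis using r1 by simp
    qed
    finally show ?thesis by (simp add: h_def)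
  qed
  have deriv: "DERIV g x :> g' x" if "0 < ereal x" "ereal x < 1" for x
  proof -
    have "x < 1" using that by simp
    thus ?thesis unfolding g_def g'_def
      by (auto intro!: derivative_eq_intros simp: field_simps power2_eq_square)
  qed
  have contf: "isCont f (g x)" if "0 < ereal x" "ereal x < 1" for x
  proof -
    have x: "0 < x" "x < 1" using that by auto
    hence "g x > 0" by (simp add: g_def)
    thus ?thesis unfolding f_def
      by (auto intro!: continuous_intros)
  qed
  have contg': "isCont g' x" if "0 < ereal x" "ereal x < 1" for x
    using that unfolding g'_def by (auto intro!: continuous_intros)
  have fnn: "0 \<le> f (g x)" for x unfolding f_def by simp
  have g'nn: "0 \<le> g' x" for x unfolding g'_def by simp
  have limA: "((ereal \<circ> g \<circ> real_of_ereal) \<longlongrightarrow> 0) (at_right 0)"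
  proof -
    have "(g \<longlongrightarrow> 0) (at_right 0)" unfolding g_def by real_asymp
    thus ?thesis unfolding zero_ereal_def ereal_tendsto_simps comp_assoc[symmetric]
      by (simp add: comp_def)
  qed
  have limB: "((ereal \<circ> g \<circ> real_of_ereal) \<longlongrightarrow> \<infinity>) (at_left 1)"
  proof -
    have "filterlim g at_top (at_left 1)" unfolding g_def by real_asymp
    thus ?thesis unfolding one_ereal_def ereal_tendsto_simps comp_assoc[symmetric]
      by (simp add: comp_def)
  qed
  have hint: "set_integrable lborel {0..1} h"
    unfolding h_def using integrable_Beta[OF A B] .
  have int_fg: "set_integrable lborel (einterval 0 1) (\<lambda>x. f (g x) * g' x)"
  proof -
    have "set_integrable lborel {0<..<1} h"
      by (rule set_integrable_subset[OF hint]) auto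
    moreover have "set_integrable lborel {0<..<1} h = set_integrable lborel {0<..<1} (\<lambda>x. f (g x) * g' x)"
      by (rule set_integrable_cong) (auto simp: fgh)
    ultimately show ?thesis by (simp add: zero_ereal_def one_ereal_def)
  qed
  note subst = interval_integral_substitution_nonneg[of 0 1 g g' f, OF _ deriv contf contg' fnn g'nn limA limB int_fg]
  have i1: "set_integrable lborel {0<..} f"
    using subst(1) by (simp add: zero_ereal_def)
  have "(LBINT x=0..\<infinity>. f x) = (LBINT x=0..1. f (g x) * g' x)" using subst(2) by simp
  also have "\<dots> = (LBINT x=0..1. h x)"
    by (rule interval_integral_cong) (auto simp: fgh zero_ereal_def one_ereal_def)
  also have "\<dots> = (LBINT x:{0..1}. h x)"
    using interval_integral_Icc[of 0 1 h] by (simp add: zero_ereal_def one_ereal_def)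
  also have "\<dots> = integral {0..1} h"
    by (rule set_borel_integral_eq_integral(2)[OF hint])
  also have "\<dots> = Beta A B"
    unfolding h_def using has_integral_Beta_real[OF A B] by (rule integral_unique)
  finally have "(LBINT x=0..\<infinity>. f x) = Beta A B" .
  hence "(LBINT x:{0<..}. f x) = Beta A B"
    by (simp add: interval_lebesgue_integral_0_infty)
  hence "integral {0<..} f = Beta A B"
    using set_borel_integral_eq_integral(2)[OF i1] by simp
  with set_borel_integral_eq_integral(1)[OF i1]
  have "(f has_integral Beta A B) {0<..}" by (metis has_integral_integral)
  from nn_integral_has_integral_lebesgue'[OF _ this]
  show ?thesis by (simp add: f_def)
qed

lemma h_integral:
  fixes a :: real and n :: nat
  assumes a: "0 < a"
  shows "(\<integral>\<^sup>+v. ennreal (v ^ (2*n) * (1 - v\<^sup>2) powr (a - 1)) * indicator {-1<..<1} v \<partial>lborel)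
         = ennreal (Beta (real n + 1/2) a)"
proof -
  define q where "q v = v ^ (2*n) * (1 - v\<^sup>2) powr (a - 1)" for v :: real
  have [measurable]: "q \<in> borel_measurable borel" unfolding q_def by measurable
  have "((\<lambda>t. t powr (real n + 1/2 - 1) * (1 - t) powr (a - 1)) has_integral
          Beta (real n + 1/2) a) {0..1}"
    using has_integral_Beta_real[of "real n + 1/2" a] a by simp
  from nn_integral_has_integral_lebesgue'[OF _ this] have
     "ennreal (Beta (real n + 1/2) a) =
        nn_integral lborel (\<lambda>t. ennreal (t powr (real n + 1/2 - 1) * (1 - t) powr (a - 1) *
                                indicator {0^2..1^2} t))"
    by (simp add: mult_ac ennreal_mult' ennreal_indicator)
  also have "\<dots> = (\<integral>\<^sup>+ x. ennreal ((x\<^sup>2) powr (real n + 1/2 - 1) * (1 - x\<^sup>2) powr (a - 1) * (2 * x) *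
                          indicator {0..1} x) \<partial>lborel)"
    by (subst nn_integral_substitution[where g = "\<lambda>x. x ^ 2" and g' = "\<lambda>x. 2 * x"])
       (auto intro!: derivative_eq_intros continuous_intros simp: set_borel_measurable_def)
  also have "\<dots> = (\<integral>\<^sup>+ x. 2 * ennreal (q x * indicator {0..1} x) \<partial>lborel)"
  proof -
    have pw: "ennreal ((x\<^sup>2) powr (real n + 1/2 - 1) * (1 - x\<^sup>2) powr (a - 1) * (2 * x) * indicator {0..1} x)
          = 2 * ennreal (q x * indicator {0..1} x)" if x0: "x \<noteq> 0" for x :: real
    proof (cases "x \<in> {0..1}")
      case True
      hence xp: "x > 0" using x0 by auto
      have "(x\<^sup>2) powr (real n + 1/2 - 1) * x = x powr (2 * real n)"
      proof -
        have "(x\<^sup>2) powr (real n + 1/2 - 1) = x powr (2 * real n - 1)"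
        proof -
          have "x\<^sup>2 = x powr 2" using xp by (simp add: powr_realpow)
          hence "(x\<^sup>2) powr (real n + 1/2 - 1) = x powr (2 * (real n + 1/2 - 1))"
            by (simp only: powr_powr)
          thus ?thesis by (simp add: algebra_simps)
        qed
        also have "\<dots> * x = x powr (2 * real n)"
          using xp by (simp add: powr_diff)
        finally show ?thesis .
      qed
      also have "\<dots> = x ^ (2*n)" using xp by (simp add: powr_realpow[symmetric])
      finally have e: "(x\<^sup>2) powr (real n + 1/2 - 1) * x = x ^ (2*n)" .
      have "(x\<^sup>2) powr (real n + 1/2 - 1) * (1 - x\<^sup>2) powr (a - 1) * (2 * x) * indicator {0..1} x
            = 2 * (q x * indicator {0..1} x)" (is "?l = _")
        using True e unfolding q_def by (simp add: algebra_simps)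
      hence "ennreal ?l = ennreal (2 * (q x * indicator {0..1} x))" by (rule arg_cong)
      also have "\<dots> = 2 * ennreal (q x * indicator {0..1} x)" by (simp add: ennreal_mult')
      finally show ?thesis .
    qed simp
    show ?thesis by (intro nn_integral_cong_AE AE_I[of _ _ "{0}"]) (use pw in auto)
  qed
  also have "\<dots> = (\<integral>\<^sup>+ x. ennreal (q x * indicator {0..1} x) \<partial>lborel) +
                    (\<integral>\<^sup>+ x. ennreal (q x * indicator {0..1} x) \<partial>lborel)"
    (is "_ = ?I + _") by (simp add: mult_2 nn_integral_add)
  also have "?I = (\<integral>\<^sup>+ x. ennreal (q x * indicator {-1..0} x) \<partial>lborel)"
    by (subst nn_integral_real_affine[of _ "-1" 0])
       (auto simp: indicator_def q_def intro!: nn_integral_cong)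
  hence "?I + ?I = \<dots> + ?I" by simp
  also have "\<dots> = (\<integral>\<^sup>+ x. ennreal (q x * (indicator {-1..0} x + indicator{0..1} x)) \<partial>lborel)"
  proof -
    have qnn: "0 \<le> q x" for x unfolding q_def by simp
    show ?thesis
      by (subst nn_integral_add [symmetric])
         (auto intro!: nn_integral_cong simp: distrib_left qnn ennreal_plus[symmetric] simp del: ennreal_plus)
  qed
  also have "\<dots> = (\<integral>\<^sup>+ x. ennreal (q x * indicator {-1..1} x) \<partial>lborel)"
    by (intro nn_integral_cong_AE AE_I[of _ _ "{0}"]) (auto simp: indicator_def)
  also have "\<dots> = (\<integral>\<^sup>+ x. ennreal (q x) * indicator {-1<..<1} x \<partial>lborel)"
    by (intro nn_integral_cong_AE AE_I[of _ _ "{1, -1}"])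
       (auto simp: indicator_def emeasure_lborel_countable)
  finally show ?thesis by (simp add: q_def)
qed

lemma measurable_F_comp:
  fixes F :: "real \<Rightarrow> real \<Rightarrow> ennreal"
  assumes "(\<lambda>p. F (fst p) (snd p)) \<in> borel_measurable (borel \<Otimes>\<^sub>M borel)"
    and "g \<in> borel_measurable N" "h \<in> borel_measurable N"
  shows "(\<lambda>x. F (g x) (h x)) \<in> borel_measurable N"
proof -
  have "(\<lambda>x. (g x, h x)) \<in> measurable N (borel \<Otimes>\<^sub>M borel)"
    using assms(2,3) by measurable
  from measurable_compose[OF this assms(1)] show ?thesis by (simp add: o_def)
qed

lemma conv_cv:
  fixes F :: "real \<Rightarrow> real \<Rightarrow> ennreal"
  assumes meas[measurable]: "(\<lambda>p. F (fst p) (snd p)) \<in> borel_measurable (borel \<Otimes>\<^sub>M borel)"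
    and zero: "\<And>x y. x \<le> 0 \<or> y \<le> 0 \<Longrightarrow> F x y = 0"
  shows "(\<integral>\<^sup>+t. (\<integral>\<^sup>+y. F (t - y) y \<partial>lborel) \<partial>lborel)
       = (\<integral>\<^sup>+u. ennreal (2 * \<bar>u\<bar>) * (\<integral>\<^sup>+v. F (u + u * v) (u - u * v) \<partial>lborel) \<partial>lborel)"
proof -
  note measurable_F_comp[OF meas, measurable]
  have inner: "(\<integral>\<^sup>+y. F (t - y) y \<partial>lborel)
      = ennreal \<bar>t/2\<bar> * (\<integral>\<^sup>+v. F (t/2 + t/2 * v) (t/2 - t/2 * v) \<partial>lborel)" for t
  proof (cases "t = 0")
    case True
    have "F (- y) y = 0" for y by (rule zero) auto
    thus ?thesis using True by simp
  next
    case False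
    hence c: "- (t/2) \<noteq> 0" by simp
    have m0: "(\<lambda>y. (t - y, y)) \<in> measurable borel (borel \<Otimes>\<^sub>M borel)" by measurable
    have m: "(\<lambda>y. F (t - y) y) \<in> borel_measurable borel"
      using measurable_compose[OF m0 meas] by (simp add: o_def)
    show ?thesis
      using nn_integral_real_affine[OF m c, of "t/2"]
      by (simp add: algebra_simps)
  qed
  have mH: "(\<lambda>t. ennreal \<bar>t/2\<bar> * (\<integral>\<^sup>+v. F (t/2 + t/2 * v) (t/2 - t/2 * v) \<partial>lborel)) \<in> borel_measurable borel"
    by measurable
  have "(\<integral>\<^sup>+t. (\<integral>\<^sup>+y. F (t - y) y \<partial>lborel) \<partial>lborel)
      = (\<integral>\<^sup>+t. ennreal \<bar>t/2\<bar> * (\<integral>\<^sup>+v. F (t/2 + t/2 * v) (t/2 - t/2 * v) \<partial>lborel) \<partial>lborel)"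
    by (simp add: inner)
  also have "\<dots> = ennreal \<bar>2\<bar> * (\<integral>\<^sup>+u. ennreal \<bar>(0 + 2 * u)/2\<bar> * (\<integral>\<^sup>+v. F ((0 + 2 * u)/2 + (0 + 2 * u)/2 * v) ((0 + 2 * u)/2 - (0 + 2 * u)/2 * v) \<partial>lborel) \<partial>lborel)"
    using nn_integral_real_affine[OF mH, of 2 0] by simp
  also have "\<dots> = (\<integral>\<^sup>+u. ennreal (2 * \<bar>u\<bar>) * (\<integral>\<^sup>+v. F (u + u * v) (u - u * v) \<partial>lborel) \<partial>lborel)"
    by (subst nn_integral_cmult[symmetric]) (auto simp: ennreal_mult' mult.assoc)
  finally show ?thesis .
qed

lemma bp_prod:
  assumes "0 < x" "0 < y"
  shows "beta_prime_density a b x * beta_prime_density a b y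
          = (Gamma (a+b) / (Gamma a * Gamma b))^2 * (x powr (a-1) * y powr (a-1)) / ((1 + x) powr (a+b) * (1 + y) powr (a+b))"
  unfolding beta_prime_density_def using assms by (simp add: power2_eq_square mult_ac)

lemma alg1:
  fixes u S U V W Z T Cs P :: real
  assumes "2*u * S * U = T"
  shows "2*u * (Cs * (U * V) / (W * Z) * S) = Cs * T * V / W * (1 / Z)"
proof -
  have "2*u * (Cs * (U * V) / (W * Z) * S) = Cs * (2*u * S * U) * V / W * (1 / Z)"
    by (simp add: mult_ac)
  thus ?thesis using assms by simp
qed

lemma alg2:
  fixes Cs T2 P V W p f Ux Vn Wn Q R :: real
  assumes "P*Ux = Q" "W*Wn = R" "W \<noteq> 0" "Wn \<noteq> 0" "f \<noteq> 0"
  shows "(Cs * T2 * P * V / W) * (p / f * (Ux * Vn / Wn)) = (Cs * T2 * p / f) * (Q / R) * (Vn * V)"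
  unfolding assms(1,2)[symmetric] using assms(3-5) by (simp add: field_simps)

lemma pw_series:
  fixes a b s u v :: real
  assumes a: "0 < a" and b: "0 < b" and u: "0 < u" and v1: "-1 < v" and v2: "v < 1"
  shows "(\<lambda>n. ((Gamma (a+b) / (Gamma a * Gamma b))^2 * 2 powr (s+1) * pochhammer (a+b) n / fact n)
               * (u powr (2*a+s+2*real n-1) / (1+u) powr (2*a+2*b+2*real n))
               * (v^(2*n) * (1-v^2) powr (a-1)))
         sums (2*u * (beta_prime_density a b (u+u * v) * beta_prime_density a b (u-u * v) * (2*u) powr s))"
proof -
  define C where "C = Gamma (a+b) / (Gamma a * Gamma b)"
  define w where "w = 1 + u"
  define z where "z = (u * v/w)^2"
  have w: "0 < w" using u by (simp add: w_def)
  have p: "0 < 1 + v" "0 < 1 - v" using v1 v2 by auto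
  have up: "0 < u + u * v" "0 < u - u * v"
  proof -
    have "0 < u*(1+v)" "0 < u*(1-v)" using u p by auto
    thus "0 < u + u * v" "0 < u - u * v" by (simp_all add: algebra_simps)
  qed
  have vv: "0 < 1 - v^2"
    using v1 v2 by (simp add: abs_square_less_1 abs_less_iff)
  have z0: "0 \<le> z" by (simp add: z_def)
  have "\<bar>v\<bar> < 1" using v1 v2 by auto
  hence "u * \<bar>v\<bar> < u * 1" using u by (intro mult_strict_left_mono) auto
  hence "u * \<bar>v\<bar> < w" unfolding w_def by linarith
  hence "\<bar>u * v\<bar> < w" using u by (simp add: abs_mult)
  hence "\<bar>u * v / w\<bar> < 1" using w by simp
  hence z1: "z < 1" unfolding z_def by (simp add: abs_square_less_1)
  have prod1: "(1 + (u + u * v)) * (1 + (u - u * v)) = w^2 * (1 - z)"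
  proof -
    have "w^2 * (1 - z) = w^2 - (u * v)^2"
      using w unfolding z_def by (simp add: power_divide field_simps)
    moreover have "(1 + (u + u * v)) * (1 + (u - u * v)) = w^2 - (u * v)^2"
      unfolding w_def by (simp add: algebra_simps power2_eq_square)
    ultimately show ?thesis by simp
  qed
  have one_z: "0 < 1 - z" using z1 by simp
  define K where "K = C^2 * 2 powr (s+1) * u powr (2*a+s-1) * (1-v^2) powr (a-1) / w powr (2*a+2*b)"
  have lhs: "2*u * (beta_prime_density a b (u+u * v) * beta_prime_density a b (u-u * v) * (2*u) powr s)
             = K * (1 - z) powr (-(a+b))"
  proof -
    have "beta_prime_density a b (u+u * v) * beta_prime_density a b (u-u * v)
          = C^2 * ((u+u * v) powr (a-1) * (u-u * v) powr (a-1)) / ((1 + (u+u * v)) powr (a+b) * (1 + (u-u * v)) powr (a+b))"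
      using up unfolding C_def by (rule bp_prod)
    also have "(u+u * v) powr (a-1) * (u-u * v) powr (a-1) = ((u+u * v)*(u-u * v)) powr (a-1)"
      using up by (simp add: powr_mult)
    also have "(u+u * v)*(u-u * v) = u^2 * (1-v^2)" by (simp add: algebra_simps power2_eq_square)
    also have "(u^2 * (1-v^2)) powr (a-1) = u powr (2*a-2) * (1-v^2) powr (a-1)"
    proof -
      have "u^2 = u powr 2" using u by (simp add: powr_realpow)
      hence "(u^2) powr (a-1) = u powr (2*(a-1))" by (simp only: powr_powr)
      hence "(u^2) powr (a-1) = u powr (2*a-2)" by (simp add: algebra_simps)
      thus ?thesis using u vv by (simp add: powr_mult)
    qed
    also have "(1 + (u+u * v)) powr (a+b) * (1 + (u-u * v)) powr (a+b) = (w^2 * (1 - z)) powr (a+b)"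
      using up by (subst powr_mult[symmetric]) (simp_all add: prod1)
    also have "\<dots> = w powr (2*a+2*b) * (1 - z) powr (a+b)"
    proof -
      have "w^2 = w powr 2" using w by (simp add: powr_realpow)
      hence "(w^2) powr (a+b) = w powr (2*(a+b))" by (simp only: powr_powr)
      hence "(w^2) powr (a+b) = w powr (2*a+2*b)" by (simp add: algebra_simps)
      thus ?thesis using w one_z by (simp add: powr_mult)
    qed
    finally have bb: "beta_prime_density a b (u+u * v) * beta_prime_density a b (u-u * v)
        = C^2 * (u powr (2*a-2) * (1-v^2) powr (a-1)) / (w powr (2*a+2*b) * (1 - z) powr (a+b))" .
    have us: "2*u * (2*u) powr s * u powr (2*a-2) = 2 powr (s+1) * u powr (2*a+s-1)"
    proof -
      have "(2*u) powr s = 2 powr s * u powr s" using u by (simp add: powr_mult)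
      moreover have "u powr s * u powr (2*a-2) * u = u powr (2*a+s-1)"
      proof -
        have "u powr s * u powr (2*a-2) * u = u powr s * u powr (2*a-2) * u powr 1" using u by simp
        also have "\<dots> = u powr (s + (2*a-2) + 1)" by (simp only: powr_add)
        also have "s + (2*a-2) + 1 = 2*a+s-1" by simp
        finally show ?thesis .
      qed
      moreover have "2 * 2 powr s = (2::real) powr (s+1)" by (simp add: powr_add)
      ultimately show ?thesis by (simp add: algebra_simps)
    qed
    have "(1 - z) powr (-(a+b)) = 1 / (1 - z) powr (a+b)" by (rule powr_minus_divide)
    moreover have "2*u * (beta_prime_density a b (u+u * v) * beta_prime_density a b (u-u * v) * (2*u) powr s)
      = C^2 * (2 powr (s+1) * u powr (2*a+s-1)) * (1-v^2) powr (a-1) / w powr (2*a+2*b) * (1 / (1 - z) powr (a+b))"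
      unfolding bb by (rule alg1[OF us])
    ultimately show ?thesis unfolding K_def by (simp add: mult.assoc)
  qed
  have termeq: "K * (pochhammer (a+b) n / fact n * z^n)
     = (C^2 * 2 powr (s+1) * pochhammer (a+b) n / fact n)
               * (u powr (2*a+s+2*real n-1) / (1+u) powr (2*a+2*b+2*real n))
               * (v^(2*n) * (1-v^2) powr (a-1))" for n
  proof -
    have zn: "z^n = u^(2*n) * v^(2*n) / w^(2*n)"
      unfolding z_def by (simp add: power_mult_distrib power_divide power_mult[symmetric] mult.commute)
    have "u^(2*n) = u powr (real (2*n))" by (rule powr_realpow[symmetric, OF u])
    hence "u powr (2*a+s-1) * u^(2*n) = u powr (2*a+s-1 + real (2*n))" by (simp add: powr_add)
    hence e1: "u powr (2*a+s-1) * u^(2*n) = u powr (2*a+s+2*real n-1)" by (simp add: algebra_simps)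
    have "w^(2*n) = w powr (real (2*n))" by (rule powr_realpow[symmetric, OF w])
    hence "w powr (2*a+2*b) * w^(2*n) = w powr (2*a+2*b + real (2*n))" by (simp add: powr_add)
    hence e2: "w powr (2*a+2*b) * w^(2*n) = w powr (2*a+2*b+2*real n)" by (simp add: algebra_simps)
    have "w^(2*n) \<noteq> 0" "w powr (2*a+2*b) \<noteq> 0" using w by auto
    from alg2[OF e1 e2 this(2) this(1), of "fact n" "C^2" "2 powr (s+1)" "(1-v^2) powr (a-1)" "pochhammer (a+b) n" "v^(2*n)"]
    show ?thesis
      unfolding K_def zn w_def[symmetric] C_def[symmetric] by simp
  qed
  from neg_binomial_series[OF z0 z1, of "a+b"]
  have "(\<lambda>n. K * (pochhammer (a+b) n / fact n * z^n)) sums (K * (1 - z) powr (-(a+b)))"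
    by (rule sums_mult)
  thus ?thesis unfolding termeq lhs C_def .
qed

lemma Gamma_dup_real:
  fixes z :: real
  assumes "0 < z"
  shows "Gamma (2*z) = 2 powr (2*z-1) * Gamma z * Gamma (z+1/2) / sqrt pi"
proof -
  have nz: "complex_of_real z \<notin> \<int>\<^sub>\<le>\<^sub>0" "complex_of_real z + 1/2 \<notin> \<int>\<^sub>\<le>\<^sub>0"
  proof -
    have "complex_of_real z \<notin> \<int>\<^sub>\<le>\<^sub>0" using assms
      by (auto elim!: nonpos_Ints_cases simp: complex_eq_iff)
    moreover have "complex_of_real z + 1/2 = complex_of_real (z + 1/2)" by simp
    moreover have "complex_of_real (z + 1/2) \<notin> \<int>\<^sub>\<le>\<^sub>0" using assms
      by (auto elim!: nonpos_Ints_cases simp: complex_eq_iff)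
    ultimately show "complex_of_real z \<notin> \<int>\<^sub>\<le>\<^sub>0" "complex_of_real z + 1/2 \<notin> \<int>\<^sub>\<le>\<^sub>0" by auto
  qed
  from Gamma_legendre_duplication[OF nz]
  have "Gamma (complex_of_real z) * Gamma (complex_of_real z + 1/2) =
        exp ((1 - 2 * complex_of_real z) * of_real (ln 2)) * of_real (sqrt pi) * Gamma (2 * complex_of_real z)" .
  also have "complex_of_real z + 1/2 = complex_of_real (z + 1/2)" by simp
  also have "2 * complex_of_real z = complex_of_real (2*z)" by simp
  also have "(1 - complex_of_real (2*z)) * of_real (ln 2) = complex_of_real ((1 - 2*z) * ln 2)" by simp
  finally have "complex_of_real (Gamma z * Gamma (z + 1/2)) = complex_of_real (exp ((1 - 2*z) * ln 2) * sqrt pi * Gamma (2*z))"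
    by (simp only: Gamma_complex_of_real exp_of_real of_real_mult[symmetric])
  hence e: "Gamma z * Gamma (z + 1/2) = exp ((1 - 2*z) * ln 2) * sqrt pi * Gamma (2*z)"
    by (simp only: of_real_eq_iff)
  have "exp ((1 - 2*z) * ln 2) = 2 powr (1 - 2*z)" by (simp add: powr_def mult.commute)
  also have "\<dots> = 1 / 2 powr (2*z - 1)" by (simp add: powr_minus_divide[symmetric])
  finally have "Gamma z * Gamma (z + 1/2) = sqrt pi * Gamma (2*z) / 2 powr (2*z - 1)" using e by simp
  thus ?thesis by (simp add: field_simps)
qed

lemma alg3:
  fixes gab ga gb gabn g2bs ghn ganh gsn gsn' gabnh gs gs' gah gabh sp f P1 Pa Pb P2 Pc Pd Pe :: real
  assumes nz: "gab \<noteq> 0" "ga \<noteq> 0" "gb \<noteq> 0" "gabn \<noteq> 0" "g2bs \<noteq> 0" "ghn \<noteq> 0" "ganh \<noteq> 0"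
     "gsn \<noteq> 0" "gsn' \<noteq> 0" "gabnh \<noteq> 0" "gs \<noteq> 0" "gs' \<noteq> 0" "gah \<noteq> 0" "gabh \<noteq> 0" "sp \<noteq> 0" "f \<noteq> 0"
     "Pb \<noteq> 0" "Pd \<noteq> 0" "Pe \<noteq> 0"
  and P: "P1 * Pa / Pb = P2 * Pc / (Pd * Pe)"
  shows "(gab/(ga * gb))^2 * P1 * (gabn/gab) / f * ((Pa * gsn * gsn' / sp) * g2bs / (Pb * gabn * gabnh / sp)) * (ghn * ga / ganh)
       = (P2 * gab^2 * g2bs * (Pc * gs * gs' / sp)) / ((Pd * ga * gah / sp) * gb^2 * (Pe * gab * gabh / sp))
         * ((gsn/gs) * (gsn'/gs') * (ghn/sp) / ((ganh/gah) * (gabnh/gabh) * f))"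
proof -
  have L: "(gab/(ga * gb))^2 * P1 * (gabn/gab) / f * ((Pa * gsn * gsn' / sp) * g2bs / (Pb * gabn * gabnh / sp)) * (ghn * ga / ganh)
        = (P1 * Pa / Pb) * (gab * gsn * gsn' * g2bs * ghn / (ga * gb^2 * f * gabnh * ganh))"
    using nz by (simp add: field_simps power2_eq_square)
  have R: "(P2 * gab^2 * g2bs * (Pc * gs * gs' / sp)) / ((Pd * ga * gah / sp) * gb^2 * (Pe * gab * gabh / sp))
         * ((gsn/gs) * (gsn'/gs') * (ghn/sp) / ((ganh/gah) * (gabnh/gabh) * f))
        = (P2 * Pc / (Pd * Pe)) * (gab * gsn * gsn' * g2bs * ghn / (ga * gb^2 * f * gabnh * ganh))"
    using nz by (simp add: field_simps power2_eq_square)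
  show ?thesis unfolding L R P ..
qed


lemma poch_G:
  fixes z :: real
  assumes "0 < z"
  shows "pochhammer z n = Gamma (z + real n) / Gamma z"
proof -
  have "z \<notin> \<int>\<^sub>\<le>\<^sub>0" using assms by (auto elim!: nonpos_Ints_cases)
  thus ?thesis by (rule pochhammer_Gamma)
qed

lemma term_identity:
  fixes a b s :: real and n :: nat
  assumes a: "0 < a" and b: "0 < b" and s1: "0 < 2*a+s" and s2: "0 < 2*b - s"
  shows "((Gamma (a+b) / (Gamma a * Gamma b))^2 * 2 powr (s+1) * pochhammer (a+b) n / fact n)
           * Beta (2*a+s+2*real n) (2*b-s) * Beta (real n + 1/2) a
       = (2 powr (2*a+s) * Gamma (a+b)^2 * Gamma (2*b-s) * Gamma (2*a+s)
           / (Gamma (2*a) * Gamma b ^ 2 * Gamma (2*a+2*b)))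
         * (pochhammer (a + s/2) n * pochhammer (a + (s+1)/2) n * pochhammer (1/2) n
            / (pochhammer (a+1/2) n * pochhammer (a+b+1/2) n * fact n) * 1 ^ n)"
proof -
  define gab where "gab = Gamma (a+b)"
  define ga where "ga = Gamma a"
  define gb where "gb = Gamma b"
  define gabn where "gabn = Gamma (a+b+real n)"
  define g2bs where "g2bs = Gamma (2*b-s)"
  define ghn where "ghn = Gamma (real n + 1/2)"
  define ganh where "ganh = Gamma (real n + 1/2 + a)"
  define gsn where "gsn = Gamma (a+s/2+real n)"
  define gsn' where "gsn' = Gamma (a+s/2+real n+1/2)"
  define gabnh where "gabnh = Gamma (a+b+real n+1/2)"
  define gs where "gs = Gamma (a+s/2)"
  define gs' where "gs' = Gamma (a+s/2+1/2)"
  define gah where "gah = Gamma (a+1/2)"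
  define gabh where "gabh = Gamma (a+b+1/2)"
  define sp where "sp = sqrt pi"
  define P1 where "P1 = (2::real) powr (s+1)"
  define Pa where "Pa = (2::real) powr (2*a+s+2*real n-1)"
  define Pb where "Pb = (2::real) powr (2*a+2*b+2*real n-1)"
  define P2 where "P2 = (2::real) powr (2*a+s)"
  define Pc where "Pc = (2::real) powr (2*a+s-1)"
  define Pd where "Pd = (2::real) powr (2*a-1)"
  define Pe where "Pe = (2::real) powr (2*a+2*b-1)"
  have as: "0 < a + s/2" using s1 by simp
  have gpos: "\<And>x::real. 0 < x \<Longrightarrow> Gamma x \<noteq> 0" using Gamma_real_pos by (metis less_irrefl)
  have nz: "gab \<noteq> 0" "ga \<noteq> 0" "gb \<noteq> 0" "gabn \<noteq> 0" "g2bs \<noteq> 0" "ghn \<noteq> 0" "ganh \<noteq> 0"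
     "gsn \<noteq> 0" "gsn' \<noteq> 0" "gabnh \<noteq> 0" "gs \<noteq> 0" "gs' \<noteq> 0" "gah \<noteq> 0" "gabh \<noteq> 0" "sp \<noteq> 0" "fact n \<noteq> (0::real)"
     "Pb \<noteq> 0" "Pd \<noteq> 0" "Pe \<noteq> 0"
    unfolding gab_def ga_def gb_def gabn_def g2bs_def ghn_def ganh_def gsn_def gsn'_def gabnh_def gs_def gs'_def
      gah_def gabh_def sp_def Pb_def Pd_def Pe_def
    using a b s2 as by (auto intro!: gpos)
  have P: "P1 * Pa / Pb = P2 * Pc / (Pd * Pe)"
  proof -
    have "P1 * Pa / Pb = (2::real) powr ((s+1) + (2*a+s+2*real n-1) - (2*a+2*b+2*real n-1))"
      unfolding P1_def Pa_def Pb_def by (simp only: powr_add powr_diff)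
    also have "(s+1) + (2*a+s+2*real n-1) - (2*a+2*b+2*real n-1) = (2*a+s) + (2*a+s-1) - ((2*a-1) + (2*a+2*b-1))"
      by simp
    also have "(2::real) powr \<dots> = P2 * Pc / (Pd * Pe)"
      unfolding P2_def Pc_def Pd_def Pe_def by (simp only: powr_add powr_diff)
    finally show ?thesis .
  qed
  have e1: "pochhammer (a+b) n = gabn / gab" unfolding gabn_def gab_def using a b by (simp add: poch_G)
  have e2: "Beta (2*a+s+2*real n) (2*b-s) = (Pa * gsn * gsn' / sp) * g2bs / (Pb * gabn * gabnh / sp)"
  proof -
    have "Gamma (2*a+s+2*real n) = Gamma (2*(a+s/2+real n))" by (simp add: algebra_simps)
    also have "\<dots> = Pa * gsn * gsn' / sp" unfolding Pa_def gsn_def gsn'_def sp_def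
      using as by (subst Gamma_dup_real) (auto simp: algebra_simps)
    finally have A: "Gamma (2*a+s+2*real n) = Pa * gsn * gsn' / sp" .
    have "Gamma (2*a+s+2*real n + (2*b-s)) = Gamma (2*(a+b+real n))" by (simp add: algebra_simps)
    also have "\<dots> = Pb * gabn * gabnh / sp" unfolding Pb_def gabn_def gabnh_def sp_def
      using a b by (subst Gamma_dup_real) (auto simp: algebra_simps)
    finally have B: "Gamma (2*a+s+2*real n + (2*b-s)) = Pb * gabn * gabnh / sp" .
    show ?thesis unfolding Beta_def A B g2bs_def ..
  qed
  have e3: "Beta (real n + 1/2) a = ghn * ga / ganh" unfolding Beta_def ghn_def ga_def ganh_def ..
  have e4: "Gamma (2*a+s) = Pc * gs * gs' / sp"
  proof -
    have "Gamma (2*a+s) = Gamma (2*(a+s/2))" by (simp add: algebra_simps)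
    also have "\<dots> = Pc * gs * gs' / sp" unfolding Pc_def gs_def gs'_def sp_def
      using as by (subst Gamma_dup_real) (auto simp: algebra_simps)
    finally show ?thesis .
  qed
  have e5: "Gamma (2*a) = Pd * ga * gah / sp" unfolding Pd_def ga_def gah_def sp_def
    using a by (subst Gamma_dup_real) (auto simp: algebra_simps)
  have e6: "Gamma (2*a+2*b) = Pe * gab * gabh / sp"
  proof -
    have "Gamma (2*a+2*b) = Gamma (2*(a+b))" by (simp add: algebra_simps)
    also have "\<dots> = Pe * gab * gabh / sp" unfolding Pe_def gab_def gabh_def sp_def
      using a b by (subst Gamma_dup_real) (auto simp: algebra_simps)
    finally show ?thesis .
  qed
  have e7: "pochhammer (a + s/2) n = gsn / gs" unfolding gsn_def gs_def using as by (simp add: poch_G)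
  have e8: "pochhammer (a + (s+1)/2) n = gsn' / gs'"
  proof -
    have "0 < a + (s+1)/2" using as by (simp add: field_simps)
    hence "pochhammer (a + (s+1)/2) n = Gamma (a + (s+1)/2 + real n) / Gamma (a + (s+1)/2)" by (rule poch_G)
    moreover have "Gamma (a + (s+1)/2 + real n) = gsn'" unfolding gsn'_def
      by (rule arg_cong[where f=Gamma]) (simp add: field_simps)
    moreover have "Gamma (a + (s+1)/2) = gs'" unfolding gs'_def
      by (rule arg_cong[where f=Gamma]) (simp add: field_simps)
    ultimately show ?thesis by simp
  qed
  have e9: "pochhammer (1/2) n = ghn / sp"
  proof -
    have "pochhammer (1/2::real) n = Gamma (1/2 + real n) / Gamma (1/2)" by (rule poch_G) simp
    thus ?thesis unfolding ghn_def sp_def by (simp add: Gamma_one_half_real add.commute)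
  qed
  have e10: "pochhammer (a+1/2) n = ganh / gah" unfolding ganh_def gah_def using a
    by (simp add: poch_G algebra_simps)
  have e11: "pochhammer (a+b+1/2) n = gabnh / gabh" unfolding gabnh_def gabh_def using a b
    by (simp add: poch_G algebra_simps)
  show ?thesis
    unfolding e1 e2 e3 e4 e5 e6 e7 e8 e9 e10 e11 power_one mult_1_right
    unfolding gab_def[symmetric] ga_def[symmetric] gb_def[symmetric] g2bs_def[symmetric] P1_def[symmetric] P2_def[symmetric]
    by (rule alg3[OF nz P])
qed

lemma bp_nonneg:
  assumes "0 < a" "0 < b"
  shows "0 \<le> beta_prime_density a b x"
  unfolding beta_prime_density_def using assms
  by (auto intro!: divide_nonneg_nonneg mult_nonneg_nonneg less_imp_le[OF Gamma_real_pos])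

lemma bp_meas[measurable]: "beta_prime_density a b \<in> borel_measurable borel"
  unfolding beta_prime_density_def[abs_def] by measurable

lemma bp_zero: "x \<le> 0 \<Longrightarrow> beta_prime_density a b x = 0"
  unfolding beta_prime_density_def by simp

lemma moment:
  fixes a b r :: real
  assumes a: "0 < a" and b: "0 < b" and r1: "-a < r" and r2: "r < b"
  shows "(\<integral>\<^sup>+x. ennreal (beta_prime_density a b x) * ennreal (x powr r) \<partial>lborel)
         = ennreal (Gamma (a+b) / (Gamma a * Gamma b) * Beta (a+r) (b-r))"
proof -
  define C where "C = Gamma (a+b) / (Gamma a * Gamma b)"
  have C0: "0 \<le> C" unfolding C_def using a b
    by (auto intro!: divide_nonneg_nonneg mult_nonneg_nonneg less_imp_le[OF Gamma_real_pos])
  have pw: "ennreal (beta_prime_density a b x) * ennreal (x powr r)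
      = ennreal C * (ennreal (x powr (a+r - 1) / (1 + x) powr (a+r + (b-r))) * indicator {0<..} x)" for x
  proof (cases "0 < x")
    case True
    have "beta_prime_density a b x * x powr r = C * (x powr (a+r - 1) / (1 + x) powr (a+r + (b-r)))"
    proof -
      have "x powr (a - 1) * x powr r = x powr (a + r - 1)" by (simp add: powr_add[symmetric] algebra_simps)
      thus ?thesis using True unfolding beta_prime_density_def C_def by (simp add: field_simps)
    qed
    hence "ennreal (beta_prime_density a b x * x powr r) = ennreal (C * (x powr (a+r - 1) / (1 + x) powr (a+r + (b-r))))"
      by simp
    thus ?thesis using True C0 a b
      by (simp add: ennreal_mult[symmetric] bp_nonneg)
  next
    case False
    thus ?thesis by (simp add: bp_zero)
  qed
  have "(\<integral>\<^sup>+x. ennreal (beta_prime_density a b x) * ennreal (x powr r) \<partial>lborel)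
      = ennreal C * (\<integral>\<^sup>+x. ennreal (x powr (a+r - 1) / (1 + x) powr (a+r + (b-r))) * indicator {0<..} x \<partial>lborel)"
    unfolding pw by (rule nn_integral_cmult) measurable
  also have "\<dots> = ennreal C * ennreal (Beta (a+r) (b-r))"
    using beta_prime_nn[of "a+r" "b-r"] r1 r2 by simp
  also have "\<dots> = ennreal (C * Beta (a+r) (b-r))"
  proof -
    have "0 \<le> Beta (a+r) (b-r)" unfolding Beta_def using r1 r2
      by (auto intro!: divide_nonneg_nonneg mult_nonneg_nonneg less_imp_le[OF Gamma_real_pos])
    thus ?thesis by (rule ennreal_mult[symmetric, OF C0])
  qed
  finally show ?thesis unfolding C_def .
qed


lemma prod_integral:
  fixes \<phi> \<psi> :: "real \<Rightarrow> ennreal"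
  assumes [measurable]: "\<phi> \<in> borel_measurable borel" "\<psi> \<in> borel_measurable borel"
  shows "(\<integral>\<^sup>+y. (\<integral>\<^sup>+x. \<phi> x * \<psi> y \<partial>lborel) \<partial>lborel) = (\<integral>\<^sup>+x. \<phi> x \<partial>lborel) * (\<integral>\<^sup>+y. \<psi> y \<partial>lborel)"
proof -
  have "(\<integral>\<^sup>+x. \<phi> x * \<psi> y \<partial>lborel) = (\<integral>\<^sup>+x. \<phi> x \<partial>lborel) * \<psi> y" for y
    by (rule nn_integral_multc) measurable
  hence "(\<integral>\<^sup>+y. (\<integral>\<^sup>+x. \<phi> x * \<psi> y \<partial>lborel) \<partial>lborel) = (\<integral>\<^sup>+y. (\<integral>\<^sup>+x. \<phi> x \<partial>lborel) * \<psi> y \<partial>lborel)"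
    by simp
  also have "\<dots> = (\<integral>\<^sup>+x. \<phi> x \<partial>lborel) * (\<integral>\<^sup>+y. \<psi> y \<partial>lborel)"
    by (rule nn_integral_cmult) measurable
  finally show ?thesis .
qed

lemma finite_F:
  fixes a b s :: real
  assumes a: "0 < a" and b: "0 < b" and s1: "-2*a < s" and s2: "s < b"
  shows "(\<integral>\<^sup>+y. (\<integral>\<^sup>+x. ennreal (beta_prime_density a b x) * ennreal (beta_prime_density a b y)
            * ennreal ((x + y) powr s) \<partial>lborel) \<partial>lborel) < \<infinity>"
proof (cases "0 \<le> s")
  case True
  define \<phi> where "\<phi> r x = ennreal (beta_prime_density a b x) * ennreal (x powr r)" for r x :: real
  have [measurable]: "\<phi> r \<in> borel_measurable borel" for r unfolding \<phi>_def by measurable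
  have M: "(\<integral>\<^sup>+x. \<phi> r x \<partial>lborel) < \<infinity>" if "-a < r" "r < b" for r
    unfolding \<phi>_def using moment[OF a b that] by simp
  have M0: "(\<integral>\<^sup>+x. \<phi> 0 x \<partial>lborel) < \<infinity>" using M[of 0] a b by simp
  have phi0': "\<phi> 0 x = ennreal (beta_prime_density a b x)" for x
    unfolding \<phi>_def by (cases "x = 0") (auto simp: bp_zero)
  have Ms: "(\<integral>\<^sup>+x. \<phi> s x \<partial>lborel) < \<infinity>" using M[of s] a True s2 by simp
  have pw: "ennreal (beta_prime_density a b x) * ennreal (beta_prime_density a b y) * ennreal ((x + y) powr s)
      \<le> ennreal (2 powr s) * (\<phi> s x * \<phi> 0 y + \<phi> 0 x * \<phi> s y)" for x y :: real
  proof (cases "0 < x \<and> 0 < y")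
    case True
    have key: "(x + y) powr s \<le> 2 powr s * (x powr s + y powr s)"
    proof (cases "x \<le> y")
      case le: True
      have "(x + y) powr s \<le> (2 * y) powr s" using True le \<open>0 \<le> s\<close> by (intro powr_mono2) auto
      also have "\<dots> = 2 powr s * y powr s" using True by (simp add: powr_mult)
      also have "\<dots> \<le> 2 powr s * (x powr s + y powr s)" by (intro mult_left_mono) auto
      finally show ?thesis .
    next
      case gt: False
      have "(x + y) powr s \<le> (2 * x) powr s" using True gt \<open>0 \<le> s\<close> by (intro powr_mono2) auto
      also have "\<dots> = 2 powr s * x powr s" using True by (simp add: powr_mult)
      also have "\<dots> \<le> 2 powr s * (x powr s + y powr s)" by (intro mult_left_mono) auto
      finally show ?thesis .
    qed
    have bx: "0 \<le> beta_prime_density a b x" "0 \<le> beta_prime_density a b y" using a b by (simp_all add: bp_nonneg)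
    have "beta_prime_density a b x * beta_prime_density a b y * (x + y) powr s
        \<le> beta_prime_density a b x * beta_prime_density a b y * (2 powr s * (x powr s + y powr s))"
      using key bx by (intro mult_left_mono) auto
    also have "\<dots> = 2 powr s * ((beta_prime_density a b x * x powr s) * (beta_prime_density a b y)
                    + (beta_prime_density a b x) * (beta_prime_density a b y * y powr s))"
      by (simp add: algebra_simps)
    finally have "ennreal (beta_prime_density a b x * beta_prime_density a b y * (x + y) powr s) \<le> ennreal (\<dots>)"
      by (rule ennreal_leI)
    also have "\<dots> = ennreal (2 powr s) * (\<phi> s x * \<phi> 0 y + \<phi> 0 x * \<phi> s y)"
    proof -
      have n1: "0 \<le> beta_prime_density a b x * x powr s * beta_prime_density a b y" using bx by simp
      have n2: "0 \<le> beta_prime_density a b x * (beta_prime_density a b y * y powr s)" using bx by simp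
      have "ennreal (2 powr s * ((beta_prime_density a b x * x powr s) * (beta_prime_density a b y)
                    + (beta_prime_density a b x) * (beta_prime_density a b y * y powr s)))
         = ennreal (2 powr s) * (ennreal (beta_prime_density a b x * x powr s * beta_prime_density a b y)
             + ennreal (beta_prime_density a b x * (beta_prime_density a b y * y powr s)))"
        using n1 n2 by (simp add: ennreal_mult ennreal_plus)
      also have "\<dots> = ennreal (2 powr s) * (\<phi> s x * \<phi> 0 y + \<phi> 0 x * \<phi> s y)"
      proof -
        have ps: "\<phi> s x = ennreal (beta_prime_density a b x) * ennreal (x powr s)"
                 "\<phi> s y = ennreal (beta_prime_density a b y) * ennreal (y powr s)"
          by (simp_all add: \<phi>_def)
        show ?thesis unfolding ps phi0' using bx by (simp add: ennreal_mult mult_ac)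
      qed
      finally show ?thesis .
    qed
    finally show ?thesis using bx by (simp add: ennreal_mult[symmetric])
  next
    case False
    hence "beta_prime_density a b x = 0 \<or> beta_prime_density a b y = 0" by (auto simp: bp_zero)
    thus ?thesis by auto
  qed
  have "(\<integral>\<^sup>+y. (\<integral>\<^sup>+x. ennreal (beta_prime_density a b x) * ennreal (beta_prime_density a b y)
            * ennreal ((x + y) powr s) \<partial>lborel) \<partial>lborel)
      \<le> (\<integral>\<^sup>+y. (\<integral>\<^sup>+x. ennreal (2 powr s) * (\<phi> s x * \<phi> 0 y + \<phi> 0 x * \<phi> s y) \<partial>lborel) \<partial>lborel)"
    by (intro nn_integral_mono pw)
  also have "\<dots> = ennreal (2 powr s) * ((\<integral>\<^sup>+x. \<phi> s x \<partial>lborel) * (\<integral>\<^sup>+x. \<phi> 0 x \<partial>lborel)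
                 + (\<integral>\<^sup>+x. \<phi> 0 x \<partial>lborel) * (\<integral>\<^sup>+x. \<phi> s x \<partial>lborel))"
  proof -
    define A where "A = (\<integral>\<^sup>+x. \<phi> s x \<partial>lborel)"
    define B where "B = (\<integral>\<^sup>+x. \<phi> 0 x \<partial>lborel)"
    have inner: "(\<integral>\<^sup>+x. ennreal (2 powr s) * (\<phi> s x * \<phi> 0 y + \<phi> 0 x * \<phi> s y) \<partial>lborel)
        = ennreal (2 powr s) * (A * \<phi> 0 y + B * \<phi> s y)" for y
    proof -
      have "(\<integral>\<^sup>+x. ennreal (2 powr s) * (\<phi> s x * \<phi> 0 y + \<phi> 0 x * \<phi> s y) \<partial>lborel)
          = ennreal (2 powr s) * (\<integral>\<^sup>+x. \<phi> s x * \<phi> 0 y + \<phi> 0 x * \<phi> s y \<partial>lborel)"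
        by (rule nn_integral_cmult) measurable
      also have "(\<integral>\<^sup>+x. \<phi> s x * \<phi> 0 y + \<phi> 0 x * \<phi> s y \<partial>lborel)
          = (\<integral>\<^sup>+x. \<phi> s x * \<phi> 0 y \<partial>lborel) + (\<integral>\<^sup>+x. \<phi> 0 x * \<phi> s y \<partial>lborel)"
        by (rule nn_integral_add) measurable
      also have "(\<integral>\<^sup>+x. \<phi> s x * \<phi> 0 y \<partial>lborel) = A * \<phi> 0 y"
        unfolding A_def by (rule nn_integral_multc) measurable
      also have "(\<integral>\<^sup>+x. \<phi> 0 x * \<phi> s y \<partial>lborel) = B * \<phi> s y"
        unfolding B_def by (rule nn_integral_multc) measurable
      finally show ?thesis .
    qed
    have "(\<integral>\<^sup>+y. ennreal (2 powr s) * (A * \<phi> 0 y + B * \<phi> s y) \<partial>lborel)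
        = ennreal (2 powr s) * (\<integral>\<^sup>+y. A * \<phi> 0 y + B * \<phi> s y \<partial>lborel)"
      by (rule nn_integral_cmult) measurable
    also have "(\<integral>\<^sup>+y. A * \<phi> 0 y + B * \<phi> s y \<partial>lborel) = (\<integral>\<^sup>+y. A * \<phi> 0 y \<partial>lborel) + (\<integral>\<^sup>+y. B * \<phi> s y \<partial>lborel)"
      by (rule nn_integral_add) measurable
    also have "(\<integral>\<^sup>+y. A * \<phi> 0 y \<partial>lborel) = A * B" unfolding B_def by (rule nn_integral_cmult) measurable
    also have "(\<integral>\<^sup>+y. B * \<phi> s y \<partial>lborel) = B * A" unfolding A_def by (rule nn_integral_cmult) measurable
    finally show ?thesis unfolding inner A_def B_def .
  qed
  also have "\<dots> < \<infinity>" using M0 Ms by (simp add: ennreal_mult_less_top)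
  finally show ?thesis .
next
  case False
  define \<phi> where "\<phi> x = ennreal (beta_prime_density a b x) * ennreal (x powr (s/2))" for x :: real
  have [measurable]: "\<phi> \<in> borel_measurable borel" unfolding \<phi>_def by measurable
  have M: "(\<integral>\<^sup>+x. \<phi> x \<partial>lborel) < \<infinity>"
    unfolding \<phi>_def using moment[OF a b, of "s/2"] s1 False b by simp
  have pw: "ennreal (beta_prime_density a b x) * ennreal (beta_prime_density a b y) * ennreal ((x + y) powr s)
      \<le> \<phi> x * \<phi> y" for x y :: real
  proof (cases "0 < x \<and> 0 < y")
    case True
    have key: "(x + y) powr s \<le> x powr (s/2) * y powr (s/2)"
    proof -
      have "(x + y) powr s = ((x + y)^2) powr (s/2)"
      proof -
        have xy: "0 < x + y" using True by simp
        have "(x + y)^2 = (x + y) powr 2" using xy by (simp add: powr_realpow)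
        hence "((x + y)^2) powr (s/2) = (x + y) powr (2 * (s/2))" by (simp only: powr_powr)
        thus ?thesis by simp
      qed
      also have "\<dots> \<le> (x * y) powr (s/2)"
      proof (rule powr_mono2')
        show "s/2 \<le> 0" using False by simp
        show "0 < x * y" using True by simp
        show "x * y \<le> (x + y)^2" using True by (simp add: power2_eq_square algebra_simps add_nonneg_nonneg)
      qed
      also have "\<dots> = x powr (s/2) * y powr (s/2)" using True by (simp add: powr_mult)
      finally show ?thesis .
    qed
    have bx: "0 \<le> beta_prime_density a b x" "0 \<le> beta_prime_density a b y" using a b by (simp_all add: bp_nonneg)
    have "beta_prime_density a b x * beta_prime_density a b y * (x + y) powr s
        \<le> beta_prime_density a b x * beta_prime_density a b y * (x powr (s/2) * y powr (s/2))"
      using key bx by (intro mult_left_mono) auto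
    also have "\<dots> = (beta_prime_density a b x * x powr (s/2)) * (beta_prime_density a b y * y powr (s/2))"
      by (simp add: algebra_simps)
    finally have "ennreal (beta_prime_density a b x * beta_prime_density a b y * (x + y) powr s) \<le> ennreal (\<dots>)"
      by (rule ennreal_leI)
    also have "\<dots> = \<phi> x * \<phi> y"
      unfolding \<phi>_def using bx by (simp add: ennreal_mult)
    finally show ?thesis using bx by (simp add: ennreal_mult[symmetric])
  next
    case False
    hence "beta_prime_density a b x = 0 \<or> beta_prime_density a b y = 0" by (auto simp: bp_zero)
    thus ?thesis by auto
  qed
  have "(\<integral>\<^sup>+y. (\<integral>\<^sup>+x. ennreal (beta_prime_density a b x) * ennreal (beta_prime_density a b y)
            * ennreal ((x + y) powr s) \<partial>lborel) \<partial>lborel)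
      \<le> (\<integral>\<^sup>+y. (\<integral>\<^sup>+x. \<phi> x * \<phi> y \<partial>lborel) \<partial>lborel)"
    by (intro nn_integral_mono pw)
  also have "\<dots> = (\<integral>\<^sup>+x. \<phi> x \<partial>lborel) * (\<integral>\<^sup>+x. \<phi> x \<partial>lborel)"
    by (rule prod_integral) measurable
  also have "\<dots> < \<infinity>" using M by (simp add: ennreal_mult_less_top)
  finally show ?thesis .
qed

theorem proposition5:
  fixes M :: "'w measure" and X Y :: "'w \<Rightarrow> real" and a b s :: real
  assumes "prob_space M"
    and "0 < a" and "0 < b" and "- 2 * a < s" and "s < b"
    and "distributed M lborel X (\<lambda>x. ennreal (beta_prime_density a b x))"
    and "distributed M lborel Y (\<lambda>x. ennreal (beta_prime_density a b x))"
    and "prob_space.indep_var M borel X borel Y"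
  shows "integrable M (\<lambda>\<omega>. (X \<omega> + Y \<omega>) powr s) \<and>
         (\<integral>\<omega>. (X \<omega> + Y \<omega>) powr s \<partial>M) =
           2 powr (2 * a + s) * Gamma (a + b) ^ 2 * Gamma (2 * b - s) * Gamma (2 * a + s)
           / (Gamma (2 * a) * Gamma b ^ 2 * Gamma (2 * a + 2 * b))
           * hyp3F2 (a + s / 2) (a + (s + 1) / 2) (1 / 2) (a + 1 / 2) (a + b + 1 / 2) 1"
proof -
  interpret P: prob_space M by fact
  note a = \<open>0 < a\<close> and b = \<open>0 < b\<close> and s1 = \<open>- 2 * a < s\<close> and s2 = \<open>s < b\<close>
  note DX = \<open>distributed M lborel X (\<lambda>x. ennreal (beta_prime_density a b x))\<close>
  note DY = \<open>distributed M lborel Y (\<lambda>x. ennreal (beta_prime_density a b x))\<close>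
  define bp where "bp = beta_prime_density a b"
  define F where "F x y = ennreal (bp x) * ennreal (bp y) * ennreal ((x + y) powr s)" for x y
  have bp_meas'[measurable]: "bp \<in> borel_measurable borel" unfolding bp_def by measurable
  have Fmeas[measurable]: "(\<lambda>p. F (fst p) (snd p)) \<in> borel_measurable (borel \<Otimes>\<^sub>M borel)"
    unfolding F_def by measurable
  note FmeasC[measurable] = measurable_F_comp[OF Fmeas]
  have Fzero: "F x y = 0" if "x \<le> 0 \<or> y \<le> 0" for x y
    using that unfolding F_def bp_def by (auto simp: bp_zero)
  have Xm[measurable]: "X \<in> borel_measurable M" using distributed_measurable[OF DX] by simp
  have Ym[measurable]: "Y \<in> borel_measurable M" using distributed_measurable[OF DY] by simp
  have conv: "distributed M lborel (\<lambda>x. X x + Y x)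
      (\<lambda>t. \<integral>\<^sup>+y. ennreal (bp (t - y)) * ennreal (bp y) \<partial>lborel)"
    using P.distributed_convolution[OF \<open>prob_space.indep_var M borel X borel Y\<close> DX DY]
    unfolding bp_def .
  have E1: "(\<integral>\<^sup>+\<omega>. ennreal ((X \<omega> + Y \<omega>) powr s) \<partial>M)
      = (\<integral>\<^sup>+t. (\<integral>\<^sup>+y. F (t - y) y \<partial>lborel) \<partial>lborel)"
  proof -
    have "(\<integral>\<^sup>+\<omega>. ennreal ((X \<omega> + Y \<omega>) powr s) \<partial>M)
        = (\<integral>\<^sup>+t. (\<integral>\<^sup>+y. ennreal (bp (t - y)) * ennreal (bp y) \<partial>lborel) * ennreal (t powr s) \<partial>lborel)"
      using distributed_nn_integral[OF conv, of "\<lambda>t. ennreal (t powr s)"] by simp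
    also have "\<dots> = (\<integral>\<^sup>+t. (\<integral>\<^sup>+y. F (t - y) y \<partial>lborel) \<partial>lborel)"
    proof (rule nn_integral_cong)
      fix t :: real
      show "(\<integral>\<^sup>+y. ennreal (bp (t - y)) * ennreal (bp y) \<partial>lborel) * ennreal (t powr s)
          = (\<integral>\<^sup>+y. F (t - y) y \<partial>lborel)"
        unfolding F_def by (subst nn_integral_multc[symmetric]) auto
    qed
    finally show ?thesis .
  qed
  have E2: "(\<integral>\<^sup>+t. (\<integral>\<^sup>+y. F (t - y) y \<partial>lborel) \<partial>lborel)
      = (\<integral>\<^sup>+u. ennreal (2 * \<bar>u\<bar>) * (\<integral>\<^sup>+v. F (u + u * v) (u - u * v) \<partial>lborel) \<partial>lborel)"
    by (rule conv_cv[OF Fmeas Fzero])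
  define cn where "cn n = (Gamma (a+b) / (Gamma a * Gamma b))^2 * 2 powr (s+1) * pochhammer (a+b) n / fact n" for n :: nat
  define gn where "gn n u = u powr (2*a+s+2*real n-1) / (1+u) powr (2*a+2*b+2*real n)" for n :: nat and u :: real
  define hn where "hn n v = v^(2*n) * (1-v^2) powr (a-1)" for n :: nat and v :: real
  define Bh where "Bh n = Beta (real n + 1/2) a" for n :: nat
  define Bg where "Bg n = Beta (2*a+s+2*real n) (2*b-s)" for n :: nat
  have cn_nn: "0 \<le> cn n" for n
    unfolding cn_def using a b by (auto intro!: divide_nonneg_nonneg mult_nonneg_nonneg less_imp_le[OF pochhammer_pos])
  have gn_nn: "0 \<le> gn n u" for n u unfolding gn_def by simp
  have hn_nn: "0 \<le> hn n v" for n v unfolding hn_def by (simp add: zero_le_even_power)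
  have Bh_nn: "0 \<le> Bh n" for n unfolding Bh_def Beta_def using a
    by (auto intro!: divide_nonneg_nonneg mult_nonneg_nonneg less_imp_le[OF Gamma_real_pos] add_nonneg_pos)
  have Bg_nn: "0 \<le> Bg n" for n unfolding Bg_def Beta_def using a b s1 s2
    by (auto intro!: divide_nonneg_nonneg mult_nonneg_nonneg less_imp_le[OF Gamma_real_pos])
  have [measurable]: "(\<lambda>u. gn n u) \<in> borel_measurable borel" for n unfolding gn_def by measurable
  have [measurable]: "(\<lambda>v. hn n v) \<in> borel_measurable borel" for n unfolding hn_def by measurable
  have PW: "ennreal (2 * \<bar>u\<bar>) * F (u + u * v) (u - u * v)
      = (\<Sum>n. ennreal (cn n * (gn n u * indicator {0<..} u) * (hn n v * indicator {-1<..<1} v)))" for u v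
  proof (cases "0 < u \<and> -1 < v \<and> v < 1")
    case True
    hence u: "0 < u" and v1: "-1 < v" and v2: "v < 1" by auto
    have sm: "(\<lambda>n. cn n * gn n u * hn n v)
        sums (2*u * (bp (u + u * v) * bp (u - u * v) * (2*u) powr s))"
      using pw_series[OF a b u v1 v2, of s] unfolding cn_def gn_def hn_def bp_def .
    have e: "(u + u * v) + (u - u * v) = 2 * u" by simp
    have "ennreal (2 * \<bar>u\<bar>) * F (u + u * v) (u - u * v)
        = ennreal (2*u * (bp (u + u * v) * bp (u - u * v) * (2*u) powr s))"
      unfolding F_def e using u a b
      by (simp add: ennreal_mult bp_def bp_nonneg mult_nonneg_nonneg mult.assoc)
    also have "\<dots> = (\<Sum>n. ennreal (cn n * gn n u * hn n v))"
      by (rule suminf_ennreal_eq[symmetric, OF _ sm])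
         (intro mult_nonneg_nonneg cn_nn gn_nn hn_nn)
    finally show ?thesis using True by simp
  next
    case False
    have "F (u + u * v) (u - u * v) = 0"
    proof (rule Fzero)
      show "u + u * v \<le> 0 \<or> u - u * v \<le> 0"
      proof (cases "0 < u")
        case True
        with False have "v \<le> -1 \<or> 1 \<le> v" by auto
        thus ?thesis
        proof
          assume "v \<le> -1"
          hence "u * (1 + v) \<le> 0" using True by (intro mult_nonneg_nonpos) auto
          thus ?thesis by (simp add: algebra_simps)
        next
          assume "1 \<le> v"
          hence "u * (1 - v) \<le> 0" using True by (intro mult_nonneg_nonpos) auto
          thus ?thesis by (simp add: algebra_simps)
        qed
      next
        case False
        thus ?thesis by linarith
      qed
    qed
    moreover have "(\<lambda>n. ennreal (cn n * (gn n u * indicator {0<..} u) * (hn n v * indicator {-1<..<1} v))) = (\<lambda>n. 0)"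
      using False by (auto simp: indicator_def)
    ultimately show ?thesis by simp
  qed
  have hint: "(\<integral>\<^sup>+v. ennreal (hn n v * indicator {-1<..<1} v) \<partial>lborel) = ennreal (Bh n)" for n
    using h_integral[OF a, of n] unfolding hn_def Bh_def by (simp add: nn_integral_set_ennreal)
  have E3: "ennreal (2 * \<bar>u\<bar>) * (\<integral>\<^sup>+v. F (u + u * v) (u - u * v) \<partial>lborel)
      = (\<Sum>n. ennreal (cn n * (gn n u * indicator {0<..} u)) * ennreal (Bh n))" for u
  proof -
    have "ennreal (2 * \<bar>u\<bar>) * (\<integral>\<^sup>+v. F (u + u * v) (u - u * v) \<partial>lborel)
        = (\<integral>\<^sup>+v. ennreal (2 * \<bar>u\<bar>) * F (u + u * v) (u - u * v) \<partial>lborel)"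
      by (rule nn_integral_cmult[symmetric]) measurable
    also have "\<dots> = (\<integral>\<^sup>+v. (\<Sum>n. ennreal (cn n * (gn n u * indicator {0<..} u) * (hn n v * indicator {-1<..<1} v))) \<partial>lborel)"
      by (simp add: PW)
    also have "\<dots> = (\<Sum>n. \<integral>\<^sup>+v. ennreal (cn n * (gn n u * indicator {0<..} u) * (hn n v * indicator {-1<..<1} v)) \<partial>lborel)"
      by (rule nn_integral_suminf) measurable
    also have "\<dots> = (\<Sum>n. ennreal (cn n * (gn n u * indicator {0<..} u)) * ennreal (Bh n))"
    proof (rule suminf_cong)
      fix n
      have nn: "0 \<le> cn n * (gn n u * indicator {0<..} u)" using cn_nn gn_nn by simp
      have "(\<integral>\<^sup>+v. ennreal (cn n * (gn n u * indicator {0<..} u) * (hn n v * indicator {-1<..<1} v)) \<partial>lborel)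
          = (\<integral>\<^sup>+v. ennreal (cn n * (gn n u * indicator {0<..} u)) * ennreal (hn n v * indicator {-1<..<1} v) \<partial>lborel)"
        by (intro nn_integral_cong) (rule ennreal_mult'[OF nn])
      also have "\<dots> = ennreal (cn n * (gn n u * indicator {0<..} u)) * (\<integral>\<^sup>+v. ennreal (hn n v * indicator {-1<..<1} v) \<partial>lborel)"
        by (rule nn_integral_cmult) measurable
      finally show "(\<integral>\<^sup>+v. ennreal (cn n * (gn n u * indicator {0<..} u) * (hn n v * indicator {-1<..<1} v)) \<partial>lborel)
          = ennreal (cn n * (gn n u * indicator {0<..} u)) * ennreal (Bh n)" unfolding hint .
    qed
    finally show ?thesis .
  qed
  have gint: "(\<integral>\<^sup>+u. ennreal (gn n u * indicator {0<..} u) \<partial>lborel) = ennreal (Bg n)" for n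
  proof -
    have A: "0 < 2*a+s+2*real n" using s1 by simp
    have B: "0 < 2*b-s" using s2 b by simp
    have eq: "2*a+s+2*real n + (2*b-s) = 2*a+2*b+2*real n" by simp
    show ?thesis using beta_prime_nn[OF A B] unfolding eq gn_def Bg_def
      by (simp add: nn_integral_set_ennreal)
  qed
  have E4: "(\<integral>\<^sup>+u. ennreal (2 * \<bar>u\<bar>) * (\<integral>\<^sup>+v. F (u + u * v) (u - u * v) \<partial>lborel) \<partial>lborel)
      = (\<Sum>n. ennreal (cn n * Bg n * Bh n))"
  proof -
    have "(\<integral>\<^sup>+u. ennreal (2 * \<bar>u\<bar>) * (\<integral>\<^sup>+v. F (u + u * v) (u - u * v) \<partial>lborel) \<partial>lborel)
        = (\<integral>\<^sup>+u. (\<Sum>n. ennreal (cn n * (gn n u * indicator {0<..} u)) * ennreal (Bh n)) \<partial>lborel)"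
      by (simp add: E3)
    also have "\<dots> = (\<Sum>n. \<integral>\<^sup>+u. ennreal (cn n * (gn n u * indicator {0<..} u)) * ennreal (Bh n) \<partial>lborel)"
      by (rule nn_integral_suminf) measurable
    also have "\<dots> = (\<Sum>n. ennreal (cn n * Bg n * Bh n))"
    proof (rule suminf_cong)
      fix n
      have "(\<integral>\<^sup>+u. ennreal (cn n * (gn n u * indicator {0<..} u)) * ennreal (Bh n) \<partial>lborel)
          = (\<integral>\<^sup>+u. ennreal (cn n) * ennreal (gn n u * indicator {0<..} u) \<partial>lborel) * ennreal (Bh n)"
        by (subst nn_integral_multc[symmetric]) (auto intro!: nn_integral_cong simp: ennreal_mult'[OF cn_nn])
      also have "(\<integral>\<^sup>+u. ennreal (cn n) * ennreal (gn n u * indicator {0<..} u) \<partial>lborel)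
          = ennreal (cn n) * ennreal (Bg n)"
        by (subst nn_integral_cmult) (auto simp: gint)
      also have "ennreal (cn n) * ennreal (Bg n) * ennreal (Bh n) = ennreal (cn n * Bg n * Bh n)"
        using cn_nn Bg_nn Bh_nn by (simp add: ennreal_mult)
      finally show "(\<integral>\<^sup>+u. ennreal (cn n * (gn n u * indicator {0<..} u)) * ennreal (Bh n) \<partial>lborel)
          = ennreal (cn n * Bg n * Bh n)" .
    qed
    finally show ?thesis .
  qed
  define R0 where "R0 = 2 powr (2 * a + s) * Gamma (a + b) ^ 2 * Gamma (2 * b - s) * Gamma (2 * a + s)
           / (Gamma (2 * a) * Gamma b ^ 2 * Gamma (2 * a + 2 * b))"
  define hy where "hy n = pochhammer (a + s / 2) n * pochhammer (a + (s + 1) / 2) n * pochhammer (1 / 2) n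
            / (pochhammer (a + 1 / 2) n * pochhammer (a + b + 1 / 2) n * fact n) * 1 ^ n" for n
  have T: "cn n * Bg n * Bh n = R0 * hy n" for n
    unfolding cn_def Bg_def Bh_def R0_def hy_def
    by (rule term_identity) (use a b s1 s2 in auto)
  have tnn: "0 \<le> cn n * Bg n * Bh n" for n using cn_nn Bg_nn Bh_nn by simp
  have Efin: "(\<integral>\<^sup>+\<omega>. ennreal ((X \<omega> + Y \<omega>) powr s) \<partial>M) < \<infinity>"
  proof -
    have cp: "case_prod (\<lambda>t y. F (t - y) y) = (\<lambda>p. F (fst p - snd p) (snd p))"
      by (rule ext) (simp add: split_beta)
    have m2: "case_prod (\<lambda>t y. F (t - y) y) \<in> borel_measurable (lborel \<Otimes>\<^sub>M lborel)"
      unfolding cp by measurable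
    have "(\<integral>\<^sup>+t. (\<integral>\<^sup>+y. F (t - y) y \<partial>lborel) \<partial>lborel) = (\<integral>\<^sup>+y. (\<integral>\<^sup>+t. F (t - y) y \<partial>lborel) \<partial>lborel)"
      using lborel_pair.Fubini'[OF m2] by simp
    also have "\<dots> = (\<integral>\<^sup>+y. (\<integral>\<^sup>+x. F x y \<partial>lborel) \<partial>lborel)"
    proof (rule nn_integral_cong)
      fix y :: real
      have m: "(\<lambda>t. F (t - y) y) \<in> borel_measurable borel" by measurable
      show "(\<integral>\<^sup>+t. F (t - y) y \<partial>lborel) = (\<integral>\<^sup>+x. F x y \<partial>lborel)"
        using nn_integral_real_affine[OF m, of 1 y] by simp
    qed
    also have "\<dots> < \<infinity>"
      using finite_F[OF a b s1 s2] unfolding F_def bp_def .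
    finally show ?thesis using E1 by simp
  qed
  have Esum: "(\<integral>\<^sup>+\<omega>. ennreal ((X \<omega> + Y \<omega>) powr s) \<partial>M) = (\<Sum>n. ennreal (cn n * Bg n * Bh n))"
    using E1 E2 E4 by simp
  have summ: "summable (\<lambda>n. cn n * Bg n * Bh n)"
    by (rule summable_suminf_not_top[OF tnn]) (use Efin Esum in simp)
  have Eval: "(\<integral>\<^sup>+\<omega>. ennreal ((X \<omega> + Y \<omega>) powr s) \<partial>M) = ennreal (\<Sum>n. cn n * Bg n * Bh n)"
    unfolding Esum by (rule suminf_ennreal2[OF tnn summ])
  have R0nz: "R0 \<noteq> 0"
  proof -
    have "0 < 2*b - s" "0 < 2*a + s" "0 < 2*a" "0 < 2*a+2*b" "0 < a+b" using a b s1 s2 by auto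
    moreover have gp: "\<And>x::real. 0 < x \<Longrightarrow> Gamma x \<noteq> 0" using Gamma_real_pos by (metis less_irrefl)
    ultimately show ?thesis unfolding R0_def using b by (simp add: gp)
  qed
  have summ2: "summable (\<lambda>n. R0 * hy n)" using summ unfolding T .
  hence summ3: "summable hy" using R0nz by (simp add: summable_cmult_iff)
  have sumval: "(\<Sum>n. cn n * Bg n * Bh n) = R0 * hyp3F2 (a + s / 2) (a + (s + 1) / 2) (1 / 2) (a + 1 / 2) (a + b + 1 / 2) 1"
    unfolding T hyp3F2_def hy_def[symmetric] using suminf_mult[OF summ3, of R0] by simp
  have meas: "(\<lambda>\<omega>. (X \<omega> + Y \<omega>) powr s) \<in> borel_measurable M" by measurable
  have int: "integrable M (\<lambda>\<omega>. (X \<omega> + Y \<omega>) powr s)"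
    by (rule integrableI_nonneg[OF meas]) (use Efin in auto)
  have "ennreal (\<integral>\<omega>. (X \<omega> + Y \<omega>) powr s \<partial>M) = ennreal (\<Sum>n. cn n * Bg n * Bh n)"
    using nn_integral_eq_integral[OF int] Eval by simp
  hence "(\<integral>\<omega>. (X \<omega> + Y \<omega>) powr s \<partial>M) = (\<Sum>n. cn n * Bg n * Bh n)"
    by (subst (asm) ennreal_inj) (auto intro!: integral_nonneg_AE suminf_nonneg summ tnn)
  with int sumval show ?thesis unfolding R0_def by simp
qed

end
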